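(* The function $g_{np}$ is $\mathbb{S}$-nearly periodic.
   Context: For an integer $x>0$ with binary expansion $x=\sum_{j\ge0}a_j2^j$, $a_j\in\{0,1\}$, let $i_x=\min\{j: a_j=1\}$. Define $g_{np}:\mathbb{Z}_{\ge0}\to\mathbb{R}$ by $g_{np}(0)=0$ and $g_{np}(x)=2^{-i_x}$ for $x>0$. A function $f:\mathbb{R}_{\ge0}\to\mathbb{R}_{\ge0}$ is sub-polynomial if for every $\alpha>0$, $\lim_{x\to\infty}x^\alpha f(x)=\infty$ and $\lim_{x\to\infty}x^{-\alpha}f(x)=0$. For a set $\mathcal{S}$ of functions, $g$ is $\mathcal{S}$-nearly periodic if (1) there is $\alpha>0$ such that for every $N>0$ there exist $x,y\in\mathbb{N}$, $x<y$, $y\ge N$ with $g(y)\le g(x)/y^\alpha$ (such $y$ is called an $\alpha$-period of $g$); and (2) for every $\alpha>0$ and every $h\in\mathcal{S}$ there is $N_1>0$ such that for all $\alpha$-periods $y\ge N_1$ and all $x<y$ with $g(y)y^\alpha\le g(x)$, $|g(x+y)-g(x)|\le \min\{g(x),g(x+y)\}h(y)$. $\mathbb{S}$ denotes the set of non-increasing sub-polynomial functions on $\mathbb{Z}_{\ge0}$. *)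

theory Defs
  imports Complex_Main
begin

definition low_bit :: "nat \<Rightarrow> nat" where
  "low_bit x = (LEAST j. odd (x div 2 ^ j))"

definition g_np :: "nat \<Rightarrow> real" where
  "g_np x = (if x = 0 then 0 else 1 / 2 ^ low_bit x)"

definition sub_polynomial :: "(nat \<Rightarrow> real) \<Rightarrow> bool" where
  "sub_polynomial f \<longleftrightarrow> (\<forall>x. f x \<ge> 0) \<and>
     (\<forall>\<alpha>>0. filterlim (\<lambda>x. real x powr \<alpha> * f x) at_top sequentially \<and>
            ((\<lambda>x. real x powr (-\<alpha>) * f x) \<longlongrightarrow> 0) sequentially)"

definition S_set :: "(nat \<Rightarrow> real) set" where
  "S_set = {h. antimono h \<and> sub_polynomial h}"

definition is_period :: "(nat \<Rightarrow> real) \<Rightarrow> real \<Rightarrow> nat \<Rightarrow> bool" where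
  "is_period g \<alpha> y \<longleftrightarrow> (\<exists>x<y. g y \<le> g x / real y powr \<alpha>)"

definition nearly_periodic :: "(nat \<Rightarrow> real) set \<Rightarrow> (nat \<Rightarrow> real) \<Rightarrow> bool" where
  "nearly_periodic S g \<longleftrightarrow>
     (\<exists>\<alpha>>0. \<forall>N>0. \<exists>x y. x < y \<and> y \<ge> N \<and> g y \<le> g x / real y powr \<alpha>) \<and>
     (\<forall>\<alpha>>0. \<forall>h\<in>S. \<exists>N1>0. \<forall>y x. is_period g \<alpha> y \<and> y \<ge> N1 \<and> x < y \<and>
        g y * real y powr \<alpha> \<le> g x \<longrightarrow>
        \<bar>g (x + y) - g x\<bar> \<le> min (g x) (g (x + y)) * h y)"

end

theory Submission
  imports Defs
begin

lemma decomp: "x > 0 \<Longrightarrow> \<exists>k m. odd m \<and> x = 2^k * (m::nat)"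
proof (induction x rule: less_induct)
  case (less x)
  show ?case
  proof (cases "odd x")
    case True then show ?thesis by (metis mult_1 power_0)
  next
    case False
    then obtain y where y: "x = 2*y" by blast
    with less.prems have "y < x" "y > 0" by auto
    with less.IH obtain k m where "odd m" "y = 2^k*m" by blast
    with y have "x = 2^(Suc k) * m" by simp
    with \<open>odd m\<close> show ?thesis by blast
  qed
qed

lemma lb_char: assumes "odd m" shows "low_bit (2^k * m) = k"
  unfolding low_bit_def
proof (rule Least_equality)
  show "odd (2^k*m div 2^k)" using assms by simp
next
  fix j assume "odd (2^k*m div 2^j)"
  show "k \<le> j"
  proof (rule ccontr)
    assume "\<not> k \<le> j"
    then have "(2::nat)^k = 2^j * 2^(k-j)" by (simp add: power_add[symmetric])
    then have "2^k*m div 2^j = 2^(k-j)*m" by simp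
    moreover have "even (2^(k-j)*m::nat)" using \<open>\<not> k \<le> j\<close> by simp
    ultimately show False using \<open>odd (2^k*m div 2^j)\<close> by simp
  qed
qed

theorem proposition53:
  shows "nearly_periodic S_set g_np"
  unfolding nearly_periodic_def
proof (intro conjI)
  show "\<exists>\<alpha>>0. \<forall>N>0. \<exists>x y. x < y \<and> y \<ge> N \<and> g_np y \<le> g_np x / real y powr \<alpha>"
  proof (rule exI[of _ 1], rule conjI[OF zero_less_one], intro allI impI)
    fix N :: nat assume "N > 0"
    have "N < 2^N" by (rule less_exp)
    moreover have "g_np (2^N) \<le> g_np 1 / real (2^N) powr 1"
    proof -
      have "low_bit (2^N) = N" using lb_char[of 1 N] by simp
      moreover have "low_bit 1 = 0" using lb_char[of 1 0] by simp
      ultimately show ?thesis by (simp add: g_np_def odd_pos)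
    qed
    moreover have "1 < (2::nat)^N" using \<open>N>0\<close> by (metis one_less_power one_less_numeral_iff semiring_norm(76))
    ultimately show "\<exists>x y. x < y \<and> y \<ge> N \<and> g_np y \<le> g_np x / real y powr 1"
      by (metis less_imp_le)
  qed
next
  show "\<forall>\<alpha>>0. \<forall>h\<in>S_set. \<exists>N1>0. \<forall>y x. is_period g_np \<alpha> y \<and> y \<ge> N1 \<and> x < y \<and>
        g_np y * real y powr \<alpha> \<le> g_np x \<longrightarrow>
        \<bar>g_np (x + y) - g_np x\<bar> \<le> min (g_np x) (g_np (x + y)) * h y"
  proof (intro allI impI ballI exI[of _ 2] conjI)
    fix \<alpha> :: real and h y x
    assume a: "\<alpha> > 0" and h: "h \<in> S_set"
    have h0: "h y \<ge> 0" using h by (simp add: S_set_def sub_polynomial_def)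
    assume H: "is_period g_np \<alpha> y \<and> 2 \<le> y \<and> x < y \<and> g_np y * real y powr \<alpha> \<le> g_np x"
    then have y2: "2 \<le> y" and le: "g_np y * real y powr \<alpha> \<le> g_np x" by auto
    have ypow: "real y powr \<alpha> > 1" using powr_less_mono2[of \<alpha> 1 "real y"] y2 a by simp
    obtain b n where bn: "odd n" "y = 2^b*n" using decomp[of y] y2 by auto
    have gy: "g_np y = 1/2^b" using bn y2 lb_char[of n b] by (simp add: g_np_def odd_pos)
    have gypos: "g_np y > 0" using gy by simp
    have x0: "x > 0"
    proof (rule ccontr)
      assume "\<not> x > 0" then have "g_np x = 0" by (simp add: g_np_def odd_pos)
      with le gypos ypow show False by (smt (verit) mult_pos_pos)
    qed
    obtain a' m where am: "odd m" "x = 2^a'*m" using decomp[of x] x0 by auto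
    have gx: "g_np x = 1/2^a'" using am x0 lb_char[of m a'] by (simp add: g_np_def odd_pos)
    have "a' < b"
    proof (rule ccontr)
      assume "\<not> a' < b"
      then have "(2::real)^b \<le> 2^a'" by simp
      then have "1/2^a' \<le> (1::real)/2^b" by (simp add: frac_le)
      with le gx gy ypow show False
        by (smt (verit, best) divide_pos_pos mult_less_cancel_left1 zero_less_power)
    qed
    have "x + y = 2^a' * (m + 2^(b-a')*n)"
      using am bn \<open>a'<b\<close> by (simp add: algebra_simps power_add[symmetric])
    moreover have "odd (m + 2^(b-a')*n)" using am \<open>a'<b\<close> by simp
    ultimately have "g_np (x+y) = g_np x"
      using am(1) odd_pos lb_char[of "m + 2^(b-a')*n" a'] gx x0 by (simp add: g_np_def odd_pos)
    moreover have "g_np x \<ge> 0" using gx by simp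
    ultimately show "\<bar>g_np (x + y) - g_np x\<bar> \<le> min (g_np x) (g_np (x + y)) * h y"
      using h0 by simp
  qed simp
qed

end
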